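(* Let $\phi$ and $\psi$ be injective endomorphisms of $F_n$. Then there is a constant $M$ such that for all distinct $\alpha_1,\alpha_2\in \mathrm{Eq}(\widehat\phi,\widehat\psi)$, setting $\alpha=\alpha_1\wedge\alpha_2$ (a finite word), the reduced form of $(\alpha\phi)^{-1}(\alpha\psi)$ has length at most $M$.
   Context: $F_n$ is the free group on a finite basis $A$; elements are identified with reduced words over $\widetilde A=A\cup A^{-1}$, $|u|$ is the length of a reduced word; maps are written on the right. For reduced (finite or infinite) words $u,v$, $u\wedge v$ is their longest common prefix. $\widehat F_n$ is the completion of $F_n$ for the prefix metric $d(u,v)=2^{-|u\wedge v|}$ ($u\ne v$), i.e. the set of all finite and infinite reduced words over $\widetilde A$. An injective endomorphism $\phi$ of $F_n$ has a unique continuous extension $\widehat\phi$ to $\widehat F_n$. For maps $f,g$ with the same domain, $\mathrm{Eq}(f,g)=\{x\mid xf=xg\}$. *)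

theory Defs
  imports Main
begin

text \<open>Letters of the free group on the finite basis of type 'a:
  (a, False) stands for the generator a, (a, True) for its inverse a^-1.\<close>
type_synonym 'a letter = "'a \<times> bool"

definition inv_letter :: "'a letter \<Rightarrow> 'a letter" where
  "inv_letter x = (fst x, \<not> snd x)"

definition reduced :: "'a letter list \<Rightarrow> bool" where
  "reduced xs \<longleftrightarrow> (\<forall>i. Suc i < length xs \<longrightarrow> xs ! Suc i \<noteq> inv_letter (xs ! i))"

fun red_cons :: "'a letter \<Rightarrow> 'a letter list \<Rightarrow> 'a letter list" where
  "red_cons x [] = [x]"
| "red_cons x (y # ys) = (if y = inv_letter x then ys else x # y # ys)"

definition reduce :: "'a letter list \<Rightarrow> 'a letter list" where
  "reduce xs = foldr red_cons xs []"

definition winv :: "'a letter list \<Rightarrow> 'a letter list" where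
  "winv xs = rev (map inv_letter xs)"

definition img_letter :: "('a \<Rightarrow> 'a letter list) \<Rightarrow> 'a letter \<Rightarrow> 'a letter list" where
  "img_letter f x = (if snd x then winv (f (fst x)) else f (fst x))"

definition endo :: "('a \<Rightarrow> 'a letter list) \<Rightarrow> 'a letter list \<Rightarrow> 'a letter list" where
  "endo f xs = reduce (concat (map (img_letter f) xs))"

definition injective_endo :: "('a \<Rightarrow> 'a letter list) \<Rightarrow> bool" where
  "injective_endo f \<longleftrightarrow> inj_on (endo f) {xs. reduced xs}"

text \<open>Elements of the completion: finite or infinite reduced words, encoded as
  sequences of optional letters (None after the end of a finite word).\<close>
definition hatF :: "(nat \<Rightarrow> 'a letter option) set" where
  "hatF = {w. (\<forall>i. w i = None \<longrightarrow> w (Suc i) = None) \<and>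
              (\<forall>i x y. w i = Some x \<longrightarrow> w (Suc i) = Some y \<longrightarrow> y \<noteq> inv_letter x)}"

definition of_list :: "'a letter list \<Rightarrow> nat \<Rightarrow> 'a letter option" where
  "of_list xs i = (if i < length xs then Some (xs ! i) else None)"

definition wtake :: "nat \<Rightarrow> (nat \<Rightarrow> 'a letter option) \<Rightarrow> 'a letter list" where
  "wtake k w = map the (takeWhile (\<lambda>x. x \<noteq> None) (map w [0..<k]))"

text \<open>The continuous extension to the completion: the limit (in the prefix
  metric) of the images of the prefixes.\<close>
definition hat :: "('a \<Rightarrow> 'a letter list) \<Rightarrow> (nat \<Rightarrow> 'a letter option) \<Rightarrow> (nat \<Rightarrow> 'a letter option)" where
  "hat f w = (THE y. y \<in> hatF \<and>
       (\<forall>n. \<exists>K. \<forall>k\<ge>K. \<forall>i<n. of_list (endo f (wtake k w)) i = y i))"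

definition Eq_hat :: "('a \<Rightarrow> 'a letter list) \<Rightarrow> ('a \<Rightarrow> 'a letter list) \<Rightarrow> (nat \<Rightarrow> 'a letter option) set" where
  "Eq_hat f g = {w \<in> hatF. hat f w = hat g w}"

definition wedge :: "(nat \<Rightarrow> 'a letter option) \<Rightarrow> (nat \<Rightarrow> 'a letter option) \<Rightarrow> 'a letter list" where
  "wedge u v = wtake (LEAST i. u i \<noteq> v i) u"

end

theory Submission
  imports Defs "HOL-Library.Sublist"
begin


lemma inv_inv[simp]: "inv_letter (inv_letter x) = x"
  by (simp add: inv_letter_def)
lemma inv_neq[simp]: "inv_letter x \<noteq> x" "x \<noteq> inv_letter x"
  by (auto simp: inv_letter_def prod_eq_iff)
lemma inv_eq_iff[simp]: "inv_letter x = inv_letter y \<longleftrightarrow> x = y"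
  by (metis inv_inv)

lemma reduced_Nil[simp]: "reduced []"
  by (auto simp: reduced_def)
lemma reduced_single[simp]: "reduced [x]"
  by (auto simp: reduced_def)

lemma red_cons_keep: "s = [] \<or> hd s \<noteq> inv_letter x \<Longrightarrow> red_cons x s = x # s"
  by (cases s) auto
lemma red_cons_del: "red_cons x (inv_letter x # r) = r"
  by simp

lemma reduced_Cons: "reduced (x # xs) \<longleftrightarrow> reduced xs \<and> (xs = [] \<or> hd xs \<noteq> inv_letter x)"
proof (cases xs)
  case Nil then show ?thesis by simp
next
  case (Cons y ys)
  show ?thesis unfolding reduced_def Cons
    apply (auto simp: nth_Cons split: nat.splits)
    done
qed

lemma red_cons_reduced: "reduced s \<Longrightarrow> reduced (red_cons x s)"
  by (cases s) (auto simp: reduced_Cons)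

lemma foldr_red_reduced: "reduced s \<Longrightarrow> reduced (foldr red_cons xs s)"
  by (induction xs) (auto intro: red_cons_reduced)

lemma reduce_reduced[simp]: "reduced (reduce xs)"
  unfolding reduce_def by (rule foldr_red_reduced) simp

lemma reduce_Nil[simp]: "reduce [] = []" by (simp add: reduce_def)
lemma reduce_Cons: "reduce (x # xs) = red_cons x (reduce xs)" by (simp add: reduce_def)

lemma reduce_id: "reduced xs \<Longrightarrow> reduce xs = xs"
  by (induction xs) (auto simp: reduce_Cons reduced_Cons red_cons_keep)

lemma reduce_append_foldr: "reduce (xs @ ys) = foldr red_cons xs (reduce ys)"
  by (simp add: reduce_def)

lemma red_cons_cancel: "reduced s \<Longrightarrow> red_cons x (red_cons (inv_letter x) s) = s"
proof (cases s)
  case (Cons y r)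
  assume "reduced s"
  show ?thesis
  proof (cases "y = x")
    case True
    then have "r = [] \<or> hd r \<noteq> inv_letter x" using \<open>reduced s\<close> Cons by (simp add: reduced_Cons)
    then show ?thesis using Cons True by (simp add: red_cons_keep)
  next
    case False
    then show ?thesis using Cons by (simp only: red_cons.simps inv_inv) simp
  qed
qed simp

lemma foldr_reduce: "reduced s \<Longrightarrow> foldr red_cons (reduce xs) s = foldr red_cons xs s"
proof (induction xs)
  case Nil then show ?case by simp
next
  case (Cons x xs)
  show ?case
  proof (cases "reduce xs")
    case Nil
    then show ?thesis using Cons by (simp add: reduce_Cons)
  next
    case (Cons y r)
    show ?thesis
    proof (cases "y = inv_letter x")
      case True
      have "foldr red_cons (x # xs) s = red_cons x (foldr red_cons (reduce xs) s)"
        using Cons.IH Cons.prems by simp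
      also have "\<dots> = red_cons x (red_cons (inv_letter x) (foldr red_cons r s))"
        using Cons True by simp
      also have "\<dots> = foldr red_cons r s"
        by (rule red_cons_cancel, rule foldr_red_reduced, rule Cons.prems)
      finally show ?thesis using Cons True by (simp add: reduce_Cons)
    next
      case False
      then show ?thesis using Cons Cons.IH Cons.prems by (simp add: reduce_Cons)
    qed
  qed
qed

lemma reduce_append_left: "reduce (reduce xs @ ys) = reduce (xs @ ys)"
  by (simp add: reduce_append_foldr foldr_reduce)

lemma reduce_append_right: "reduce (xs @ reduce ys) = reduce (xs @ ys)"
  by (simp add: reduce_append_foldr reduce_id)

lemma reduce_mid: "reduce (xs @ reduce ys @ zs) = reduce (xs @ ys @ zs)"
  by (metis reduce_append_foldr reduce_append_left)

lemma reduce_cancel2: "reduce (xs @ [x, inv_letter x] @ zs) = reduce (xs @ zs)"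
proof -
  have "reduce ([x, inv_letter x] @ zs) = reduce zs"
    using red_cons_cancel[of "reduce zs" x] by (simp add: reduce_Cons)
  then show ?thesis by (metis reduce_append_foldr)
qed

definition winvd :: "'a letter list \<Rightarrow> 'a letter list" where "winvd = winv"

lemma winv_Nil[simp]: "winv [] = []" by (simp add: winv_def)
lemma winv_Cons: "winv (x # xs) = winv xs @ [inv_letter x]" by (simp add: winv_def)
lemma winv_append: "winv (xs @ ys) = winv ys @ winv xs" by (simp add: winv_def)
lemma winv_winv[simp]: "winv (winv xs) = xs" by (simp add: winv_def rev_map comp_def)
lemma length_winv[simp]: "length (winv xs) = length xs" by (simp add: winv_def)
lemma winv_eq_Nil[simp]: "winv xs = [] \<longleftrightarrow> xs = []" by (simp add: winv_def)

lemma reduce_cancel_winv: "reduce (xs @ winv p @ p @ zs) = reduce (xs @ zs)"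
proof (induction p arbitrary: zs)
  case Nil then show ?case by simp
next
  case (Cons a p)
  have "reduce (xs @ winv (a # p) @ (a # p) @ zs) = reduce ((xs @ winv p) @ [inv_letter a, a] @ (p @ zs))"
    by (simp add: winv_Cons)
  also have "\<dots> = reduce ((xs @ winv p) @ [inv_letter a, inv_letter (inv_letter a)] @ (p @ zs))" by simp
  also have "\<dots> = reduce (xs @ winv p @ p @ zs)" by (subst reduce_cancel2) simp
  finally show ?case using Cons.IH by simp
qed

lemma reduce_cancel_winv': "reduce (xs @ p @ winv p @ zs) = reduce (xs @ zs)"
  using reduce_cancel_winv[of xs "winv p" zs] by simp

lemma reduced_append: "reduced (xs @ ys) \<longleftrightarrow> reduced xs \<and> reduced ys \<and>
   (xs = [] \<or> ys = [] \<or> hd ys \<noteq> inv_letter (last xs))"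
  by (induction xs) (auto simp: reduced_Cons)

lemma reduced_winv: "reduced ys \<Longrightarrow> reduced (winv ys)"
proof (induction ys)
  case (Cons y ys)
  then show ?case
    by (auto simp: winv_Cons reduced_append reduced_Cons winv_def last_rev hd_map)
qed simp

lemma reduce_winv: "reduce (winv xs) = winv (reduce xs)"
proof -
  have "reduce (winv xs) = reduce (winv (reduce xs))"
  proof (induction xs)
    case Nil then show ?case by simp
  next
    case (Cons x xs)
    have "reduce (winv (x # xs)) = reduce (reduce (winv xs) @ [inv_letter x])"
      by (simp add: winv_Cons reduce_append_left)
    also have "\<dots> = reduce (winv (reduce xs) @ [inv_letter x])"
      using Cons.IH by (simp add: reduce_append_left)
    also have "\<dots> = reduce (winv (reduce (x # xs)))"
    proof (cases "reduce xs")
      case Nil then show ?thesis by (simp add: reduce_Cons winv_Cons)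
    next
      case (Cons y r)
      show ?thesis
      proof (cases "y = inv_letter x")
        case True
        have "reduce (winv r @ [x, inv_letter x] @ []) = reduce (winv r @ [])" by (rule reduce_cancel2)
        then show ?thesis using Cons True by (simp add: reduce_Cons winv_Cons)
      next
        case False
        then show ?thesis using Cons by (simp add: reduce_Cons winv_Cons)
      qed
    qed
    finally show ?case .
  qed
  moreover have "reduced (winv (reduce xs))"
    by (simp add: reduced_winv)
  ultimately show ?thesis by (simp add: reduce_id)
qed

lemma length_reduce: "length (reduce xs) \<le> length xs"
proof (induction xs)
  case (Cons x xs) then show ?case by (cases "reduce xs") (auto simp: reduce_Cons)
qed simp



fun lcp :: "'b list \<Rightarrow> 'b list \<Rightarrow> 'b list" where
  "lcp (x # xs) (y # ys) = (if x = y then x # lcp xs ys else [])"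
| "lcp _ _ = []"

lemma lcp_prefix1: "prefix (lcp p q) p"
  by (induction p q rule: lcp.induct) auto
lemma lcp_prefix2: "prefix (lcp p q) q"
  by (induction p q rule: lcp.induct) auto
lemma lcp_greatest: "prefix r p \<Longrightarrow> prefix r q \<Longrightarrow> prefix r (lcp p q)"
proof (induction p q arbitrary: r rule: lcp.induct)
  case (1 x xs y ys)
  then show ?case by (cases r) auto
qed auto
lemma lcp_comm: "lcp p q = lcp q p"
  by (induction p q rule: lcp.induct) (auto elim: lcp.elims)
lemma lcp_take: "lcp (take n p) (take n q) = take n (lcp p q)"
proof (induction p q arbitrary: n rule: lcp.induct)
  case (1 x xs y ys)
  then show ?case by (cases n) auto
qed auto

lemma lcp_rest: "drop (length (lcp p q)) p = [] \<or> drop (length (lcp p q)) q = [] \<or>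
   hd (drop (length (lcp p q)) p) \<noteq> hd (drop (length (lcp p q)) q)"
  by (induction p q rule: lcp.induct) auto

definition G :: "'b list \<Rightarrow> 'b list \<Rightarrow> nat" where "G p q = length (lcp p q)"

lemma G_le1: "G p q \<le> length p" unfolding G_def using lcp_prefix1 prefix_length_le by blast
lemma G_le2: "G p q \<le> length q" unfolding G_def using lcp_prefix2 prefix_length_le by blast
lemma G_comm: "G p q = G q p" by (simp add: G_def lcp_comm)
lemma G_prefix: "prefix r p \<Longrightarrow> prefix r q \<Longrightarrow> length r \<le> G p q"
  unfolding G_def using lcp_greatest prefix_length_le by blast
lemma G_take: "G (take n p) (take n q) = min n (G p q)"
  by (simp add: G_def lcp_take)
lemma G_ultra: "min (G p q) (G q r) \<le> G p r"
proof -
  let ?k = "min (G p q) (G q r)"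
  have "prefix (take ?k (lcp p q)) p" "prefix (take ?k (lcp p q)) q"
    using lcp_prefix1 lcp_prefix2 prefix_order.trans take_is_prefix by blast+
  moreover have "prefix (take ?k (lcp q r)) q" "prefix (take ?k (lcp q r)) r"
    using lcp_prefix1 lcp_prefix2 prefix_order.trans take_is_prefix by blast+
  moreover have "length (take ?k (lcp p q)) = ?k" "length (take ?k (lcp q r)) = ?k"
    by (auto simp: G_def)
  ultimately have "take ?k (lcp p q) = take ?k (lcp q r)"
    by (metis prefix_length_prefix prefix_order.antisym order_refl)
  then have "prefix (take ?k (lcp p q)) r"
    using \<open>prefix (take ?k (lcp q r)) r\<close> by simp
  then show ?thesis using G_prefix[OF \<open>prefix (take ?k (lcp p q)) p\<close>]
    \<open>length (take ?k (lcp p q)) = ?k\<close> by metis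
qed

lemma last_winv: "xs \<noteq> [] \<Longrightarrow> last (winv xs) = inv_letter (hd xs)"
  by (simp add: winv_def last_rev hd_map)
lemma hd_winv: "xs \<noteq> [] \<Longrightarrow> hd (winv xs) = inv_letter (last xs)"
  by (simp add: winv_def hd_rev last_map)

lemma reduced_drop: "reduced xs \<Longrightarrow> reduced (drop n xs)"
  by (metis append_take_drop_id reduced_append)
lemma reduced_take: "reduced xs \<Longrightarrow> reduced (take n xs)"
  by (metis append_take_drop_id reduced_append)

lemma reduce_winv_app:
  assumes "reduced u" "reduced v"
  shows "reduce (winv u @ v) = winv (drop (G u v) u) @ drop (G u v) v"
proof -
  let ?k = "G u v"
  let ?P = "lcp u v"
  have u: "u = ?P @ drop ?k u" and v: "v = ?P @ drop ?k v"
    by (metis G_def append_take_drop_id lcp_prefix1 lcp_prefix2 prefix_def append_eq_conv_conj)+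
  have "winv u @ v = winv (drop ?k u) @ winv ?P @ ?P @ drop ?k v"
    by (metis u v winv_append append.assoc)
  then have "reduce (winv u @ v) = reduce (winv (drop ?k u) @ drop ?k v)"
    using reduce_cancel_winv[of "winv (drop ?k u)" ?P "drop ?k v"] by simp
  moreover have "reduced (winv (drop ?k u) @ drop ?k v)"
    using lcp_rest[of u v] assms
    by (auto simp: reduced_append reduced_winv reduced_drop last_winv G_def)
  ultimately show ?thesis by (simp add: reduce_id)
qed

lemma dist_formula:
  assumes "reduced u" "reduced v"
  shows "length (reduce (winv u @ v)) + 2 * G u v = length u + length v"
  using reduce_winv_app[OF assms] G_le1[of u v] G_le2[of u v] by simp

abbreviation CC :: "('a \<Rightarrow> 'a letter list) \<Rightarrow> 'a letter list \<Rightarrow> 'a letter list" where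
  "CC f xs \<equiv> concat (map (img_letter f) xs)"

lemma img_inv: "img_letter f (inv_letter x) = winv (img_letter f x)"
  by (simp add: img_letter_def inv_letter_def)

lemma CC_winv: "CC f (winv xs) = winv (CC f xs)"
  by (induction xs) (auto simp: winv_Cons winv_append img_inv)

lemma endo_Nil[simp]: "endo f [] = []" by (simp add: endo_def)
lemma endo_reduced[simp]: "reduced (endo f xs)" by (simp add: endo_def)

lemma endo_append: "endo f (xs @ ys) = reduce (endo f xs @ endo f ys)"
  by (simp add: endo_def reduce_append_left reduce_append_right)

lemma endo_winv: "endo f (winv xs) = winv (endo f xs)"
  by (simp add: endo_def CC_winv reduce_winv)

lemma endo_d: "reduce (winv (endo f p) @ endo f q) = endo f (winv p @ q)"
  by (simp add: endo_append endo_winv)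

lemma endo_cancel: "endo f (winv T @ T @ X) = endo f X"
  unfolding endo_def
  using reduce_cancel_winv[of "[]" "CC f T" "CC f X"] by (simp add: CC_winv)

definition LL :: "('a::finite \<Rightarrow> 'a letter list) \<Rightarrow> nat" where
  "LL f = Max (range (\<lambda>a. length (f a)))"

lemma len_img: "length (img_letter f x) \<le> LL f"
  unfolding LL_def img_letter_def by (auto intro: Max_ge)

lemma length_CC: "length (CC f xs) \<le> LL f * length xs"
proof (induction xs)
  case (Cons x xs) then show ?case using len_img[of f x] by simp
qed simp

lemma length_endo: "length (endo f xs) \<le> LL f * length xs"
  unfolding endo_def using length_reduce length_CC order_trans by blast

lemma winv_take_app: "winv (take i s) @ take (Suc i) s = winv (take i s) @ take i s @ drop i (take (Suc i) s)"
  by (metis append_take_drop_id take_take min.absorb1 le_SucI order_refl)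

lemma step_dist:
  "length (reduce (winv (endo f (take i s)) @ endo f (take (Suc i) s))) \<le> LL f"
proof -
  have "reduce (winv (endo f (take i s)) @ endo f (take (Suc i) s)) = endo f (drop i (take (Suc i) s))"
    by (simp add: endo_d winv_take_app endo_cancel)
  also have "length \<dots> \<le> LL f * length (drop i (take (Suc i) s))" by (rule length_endo)
  also have "\<dots> \<le> LL f" proof - have "length (drop i (take (Suc i) s)) \<le> 1" by simp then show ?thesis by (metis mult.right_neutral mult_le_mono2) qed
  finally show ?thesis .
qed



definition dd :: "'a letter list \<Rightarrow> 'a letter list \<Rightarrow> nat" where
  "dd u v = length (reduce (winv u @ v))"

lemma dd_triangle: "dd u w \<le> dd u v + dd v w"
proof -
  have "reduce (winv u @ w) = reduce (winv u @ v @ winv v @ w)"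
    using reduce_cancel_winv'[of "winv u" v w] by simp
  also have "\<dots> = reduce (reduce (winv u @ v) @ reduce (winv v @ w))"
    by (simp add: reduce_append_left reduce_append_right)
  finally have "dd u w = length (reduce (reduce (winv u @ v) @ reduce (winv v @ w)))"
    by (simp add: dd_def)
  also have "\<dots> \<le> dd u v + dd v w"
    using length_reduce[of "reduce (winv u @ v) @ reduce (winv v @ w)"] by (simp add: dd_def)
  finally show ?thesis .
qed

lemma dd_sym: "dd u v = dd v u"
proof -
  have "winv (winv u @ v) = winv v @ u" by (simp add: winv_append)
  then show ?thesis unfolding dd_def by (metis length_winv reduce_winv)
qed

lemma cross:
  assumes "\<not> B (b 0)" "B (b n)"
  shows "\<exists>i<n. \<not> B (b i) \<and> B (b (Suc i))"
  using assms
proof (induction n)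
  case 0 then show ?case by simp
next
  case (Suc n)
  show ?case
  proof (cases "B (b n)")
    case True
    then obtain i where "i < n" "\<not> B (b i)" "B (b (Suc i))" using Suc by blast
    then show ?thesis using less_SucI by blast
  next
    case False
    then show ?thesis using Suc by blast
  qed
qed

lemma near:
  assumes "reduced x" "reduced y" "reduced P" "prefix P y" "\<not> prefix P x"
  shows "dd x P \<le> dd x y"
proof -
  have "prefix (lcp x P) y" using lcp_prefix2 assms(4) prefix_order.trans by blast
  then have a: "G x P \<le> G x y" unfolding G_def using lcp_prefix1 lcp_greatest prefix_length_le by blast
  have "length (lcp x y) < length P"
  proof (rule ccontr)
    assume "\<not> ?thesis"
    then have "prefix P (lcp x y)" using lcp_prefix2 assms(4) prefix_length_prefix by (metis not_less)
    then show False using lcp_prefix1 assms(5) prefix_order.trans by blast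
  qed
  then have "prefix (lcp x y) P" using lcp_prefix2 assms(4) prefix_length_prefix less_imp_le by metis
  then have "G x y \<le> G x P" unfolding G_def using lcp_prefix1 lcp_greatest prefix_length_le by blast
  with a have "G x y = G x P" by simp
  moreover have "length P \<le> length y" using assms(4) prefix_length_le by blast
  ultimately show ?thesis using dist_formula[of x P] dist_formula[of x y] assms unfolding dd_def by linarith
qed

lemma len_le_dd: "reduced b \<Longrightarrow> reduced P \<Longrightarrow> length P \<le> length b + dd b P"
  using dist_formula[of b P] G_le1[of b P] unfolding dd_def by linarith

lemma finite_ball:
  assumes "injective_endo (f :: 'a::finite \<Rightarrow> 'a letter list)"
  shows "finite {w. reduced w \<and> length (endo f w) \<le> R}"
proof -
  let ?S = "{w. reduced w \<and> length (endo f w) \<le> R}"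
  have "endo f ` ?S \<subseteq> {xs. set xs \<subseteq> UNIV \<and> length xs \<le> R}" by auto
  moreover have "finite {xs :: 'a letter list. set xs \<subseteq> UNIV \<and> length xs \<le> R}"
    by (rule finite_lists_length_le) simp
  ultimately have "finite (endo f ` ?S)" by (rule finite_subset)
  moreover have "inj_on (endo f) ?S"
    using assms unfolding injective_endo_def by (rule inj_on_subset) auto
  ultimately show ?thesis using finite_imageD by blast
qed

definition DD :: "('a::finite \<Rightarrow> 'a letter list) \<Rightarrow> nat \<Rightarrow> nat" where
  "DD f R = Max (length ` {w. reduced w \<and> length (endo f w) \<le> R})"

lemma DD_ge:
  assumes "injective_endo f" "reduced w" "length (endo f w) \<le> R"
  shows "length w \<le> DD f R"
  unfolding DD_def using finite_ball[OF assms(1)] assms(2,3) by (auto intro: Max_ge)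

definition BC :: "('a::finite \<Rightarrow> 'a letter list) \<Rightarrow> nat" where
  "BC f = LL f * (DD f (2 * LL f) + 1)"

lemma BCL:
  assumes inj: "injective_endo f" and rs: "reduced s" and rt: "reduced t"
    and hd: "s = [] \<or> t = [] \<or> hd s \<noteq> hd t"
  shows "G (endo f s) (endo f t) \<le> BC f"
proof (cases "lcp (endo f s) (endo f t) = []")
  case True then show ?thesis by (simp add: G_def)
next
  case False
  let ?P = "lcp (endo f s) (endo f t)"
  have rP: "reduced ?P"
    by (metis endo_reduced lcp_prefix1 prefix_def reduced_append)
  let ?b = "\<lambda>i. endo f (take i s)"
  let ?a = "\<lambda>i. endo f (take i t)"
  have "\<exists>i<length s. \<not> prefix ?P (?b i) \<and> prefix ?P (?b (Suc i))"
    by (rule cross[where B = "prefix ?P"]) (use False lcp_prefix1 in auto)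
  then obtain i where i: "i < length s" "\<not> prefix ?P (?b i)" "prefix ?P (?b (Suc i))" by blast
  have "\<exists>j<length t. \<not> prefix ?P (?a j) \<and> prefix ?P (?a (Suc j))"
    by (rule cross[where B = "prefix ?P"]) (use False lcp_prefix2 in auto)
  then obtain j where j: "j < length t" "\<not> prefix ?P (?a j)" "prefix ?P (?a (Suc j))" by blast
  have bi: "dd (?b i) ?P \<le> LL f"
    using near[OF endo_reduced endo_reduced rP i(3) i(2)] step_dist[of f i s]
    unfolding dd_def by linarith
  have aj: "dd (?a j) ?P \<le> LL f"
    using near[OF endo_reduced endo_reduced rP j(3) j(2)] step_dist[of f j t]
    unfolding dd_def by linarith
  have "dd (?b i) (?a j) \<le> 2 * LL f"
    using dd_triangle[of "?b i" "?a j" ?P] dd_sym[of ?P "?a j"] bi aj by linarith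
  moreover have "dd (?b i) (?a j) = length (endo f (winv (take i s) @ take j t))"
    unfolding dd_def by (simp add: endo_d)
  moreover have rW: "reduced (winv (take i s) @ take j t)"
    using hd i(1) j(1) rs rt
    by (auto simp: reduced_append reduced_winv reduced_take last_winv)
  ultimately have "length (winv (take i s) @ take j t) \<le> DD f (2 * LL f)"
    using DD_ge[OF inj rW] by simp
  then have ij: "i + j \<le> DD f (2 * LL f)" using i(1) j(1) by simp
  have "length ?P \<le> length (?b i) + dd (?b i) ?P" by (rule len_le_dd[OF endo_reduced rP])
  also have "\<dots> \<le> LL f * i + LL f"
    using length_endo[of f "take i s"] bi i(1) by simp
  also have "\<dots> \<le> BC f" unfolding BC_def using ij
    by (metis add_le_mono1 le_add1 le_trans mult_Suc_right mult_le_mono2 Suc_eq_plus1 add.commute)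
  finally show ?thesis by (simp add: G_def)
qed



lemma take_winv_drop: "winv (drop c (winv x)) = take (length x - c) x"
  by (simp add: winv_def drop_rev rev_map[symmetric] take_map comp_def)

lemma BCL_prefix:
  assumes inj: "injective_endo f" and r: "reduced (s @ t)"
  shows "prefix (take (length (endo f s) - BC f) (endo f s)) (endo f (s @ t))"
proof -
  let ?x = "endo f s" and ?w = "endo f t"
  have rs: "reduced s" and rt: "reduced t" using r by (auto simp: reduced_append)
  have "G (endo f (winv s)) ?w \<le> BC f"
    by (rule BCL[OF inj reduced_winv[OF rs] rt]) (use r in \<open>auto simp: reduced_append hd_winv\<close>)
  then have c: "G (winv ?x) ?w \<le> BC f" by (simp add: endo_winv)
  have "endo f (s @ t) = reduce (winv (winv ?x) @ ?w)" by (simp add: endo_append)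
  also have "\<dots> = winv (drop (G (winv ?x) ?w) (winv ?x)) @ drop (G (winv ?x) ?w) ?w"
    by (rule reduce_winv_app) (auto simp: reduced_winv)
  also have "\<dots> = take (length ?x - G (winv ?x) ?w) ?x @ drop (G (winv ?x) ?w) ?w"
    by (simp add: take_winv_drop)
  finally have e: "endo f (s @ t) = take (length ?x - G (winv ?x) ?w) ?x @ drop (G (winv ?x) ?w) ?w" .
  have "take (length ?x - BC f) ?x = take (length ?x - BC f) (take (length ?x - G (winv ?x) ?w) ?x)"
    using c by (simp add: min_def)
  then have "prefix (take (length ?x - BC f) ?x) (take (length ?x - G (winv ?x) ?w) ?x)"
    by (metis take_is_prefix)
  then show ?thesis unfolding e by (metis prefix_append)
qed

lemma of_list_eq: "of_list p = of_list q \<Longrightarrow> p = q"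
proof -
  assume e: "of_list p = of_list q"
  have "length p = length q"
  proof (rule ccontr)
    assume "length p \<noteq> length q"
    then consider "length p < length q" | "length q < length p" by linarith
    then show False
    proof cases
      case 1 then have "of_list p (length p) \<noteq> of_list q (length p)" by (simp add: of_list_def)
      then show False using e by simp
    next
      case 2 then have "of_list p (length q) \<noteq> of_list q (length q)" by (simp add: of_list_def)
      then show False using e by simp
    qed
  qed
  moreover have "\<And>i. i < length p \<Longrightarrow> p ! i = q ! i"
    using e calculation by (metis of_list_def option.inject)
  ultimately show ?thesis by (rule nth_equalityI)
qed

lemma of_list_take: "of_list (take n p) i = (if i < n then of_list p i else None)"
  by (simp add: of_list_def)

lemma of_list_take_eq: "(\<forall>i<n. of_list p i = of_list q i) \<Longrightarrow> take n p = take n q"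
  by (rule of_list_eq) (auto simp: of_list_take)

lemma of_list_hatF: "reduced p \<Longrightarrow> of_list p \<in> hatF"
  unfolding hatF_def of_list_def reduced_def by auto

lemma hatF_None: "\<alpha> \<in> hatF \<Longrightarrow> \<alpha> i = None \<Longrightarrow> i \<le> j \<Longrightarrow> \<alpha> j = None"
proof (induction j)
  case 0 then show ?case by simp
next
  case (Suc j)
  then show ?case unfolding hatF_def by (cases "i = Suc j") auto
qed

lemma wtake_all: "\<forall>i<k. \<alpha> i \<noteq> None \<Longrightarrow> wtake k \<alpha> = map (\<lambda>i. the (\<alpha> i)) [0..<k]"
  unfolding wtake_def by (subst takeWhile_eq_all_conv[THEN iffD2]) auto

lemma of_list_wtake:
  assumes "\<alpha> \<in> hatF"
  shows "of_list (wtake k \<alpha>) i = (if i < k then \<alpha> i else None)"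
proof (cases "\<forall>i<k. \<alpha> i \<noteq> None")
  case True
  then show ?thesis by (auto simp: wtake_all of_list_def)
next
  case False
  define m where "m = (LEAST i. \<alpha> i = None)"
  obtain i0 where i0: "i0 < k" "\<alpha> i0 = None" using False by blast
  have am: "\<alpha> m = None" unfolding m_def using i0(2) by (rule LeastI)
  have "m \<le> i0" unfolding m_def using i0(2) by (rule Least_le)
  then have mk: "m < k" using i0(1) by simp
  have bm: "\<forall>i<m. \<alpha> i \<noteq> None" unfolding m_def using not_less_Least by blast
  have upt: "[0..<k] = [0..<m] @ m # [Suc m..<k]"
  proof -
    have "[0..<k] = [0..<m] @ [m..<k]" using mk upt_add_eq_append[of 0 m "k - m"] by simp
    also have "[m..<k] = m # [Suc m..<k]" using mk by (simp add: upt_conv_Cons)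
    finally show ?thesis .
  qed
  have "map \<alpha> [0..<k] = map \<alpha> [0..<m] @ None # map \<alpha> [Suc m..<k]" using upt am by simp
  moreover have "takeWhile (\<lambda>x. x \<noteq> None) (map \<alpha> [0..<m] @ None # map \<alpha> [Suc m..<k]) = map \<alpha> [0..<m]"
    by (subst takeWhile_append2) (use bm in auto)
  ultimately have "takeWhile (\<lambda>x. x \<noteq> None) (map \<alpha> [0..<k]) = map \<alpha> [0..<m]" by simp
  then have "wtake k \<alpha> = map (\<lambda>i. the (\<alpha> i)) [0..<m]" unfolding wtake_def by simp
  then show ?thesis using hatF_None[OF assms am] bm mk
    by (auto simp: of_list_def not_less)
qed

lemma wtake_reduced: "\<alpha> \<in> hatF \<Longrightarrow> reduced (wtake k \<alpha>)"
proof -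
  assume a: "\<alpha> \<in> hatF"
  show ?thesis unfolding reduced_def
  proof (intro allI impI)
    fix i assume i: "Suc i < length (wtake k \<alpha>)"
    have "of_list (wtake k \<alpha>) i = Some (wtake k \<alpha> ! i)"
      "of_list (wtake k \<alpha>) (Suc i) = Some (wtake k \<alpha> ! Suc i)"
      using i by (auto simp: of_list_def)
    then have "\<alpha> i = Some (wtake k \<alpha> ! i)" "\<alpha> (Suc i) = Some (wtake k \<alpha> ! Suc i)"
      unfolding of_list_wtake[OF a] by (auto split: if_splits)
    then show "wtake k \<alpha> ! Suc i \<noteq> inv_letter (wtake k \<alpha> ! i)"
      using a unfolding hatF_def by blast
  qed
qed

lemma wtake_take: "\<alpha> \<in> hatF \<Longrightarrow> k \<le> k' \<Longrightarrow> take k (wtake k' \<alpha>) = wtake k \<alpha>"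
  by (rule of_list_eq) (auto simp: of_list_take of_list_wtake)



definition conv :: "('a \<Rightarrow> 'a letter list) \<Rightarrow> (nat \<Rightarrow> 'a letter option) \<Rightarrow> (nat \<Rightarrow> 'a letter option) \<Rightarrow> bool" where
  "conv f \<alpha> y \<longleftrightarrow> (\<forall>n. \<exists>K. \<forall>k\<ge>K. \<forall>i<n. of_list (endo f (wtake k \<alpha>)) i = y i)"

lemma conv_unique: "conv f \<alpha> y \<Longrightarrow> conv f \<alpha> y' \<Longrightarrow> y = y'"
proof (rule ext)
  fix i assume c: "conv f \<alpha> y" "conv f \<alpha> y'"
  obtain K where K: "\<forall>k\<ge>K. \<forall>j<Suc i. of_list (endo f (wtake k \<alpha>)) j = y j"
    using c(1) unfolding conv_def by blast
  obtain K' where K': "\<forall>k\<ge>K'. \<forall>j<Suc i. of_list (endo f (wtake k \<alpha>)) j = y' j"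
    using c(2) unfolding conv_def by blast
  show "y i = y' i" using K[rule_format, of "max K K'" i] K'[rule_format, of "max K K'" i] by simp
qed

lemma conv_exists:
  fixes f :: "'a::finite \<Rightarrow> 'a letter list"
  assumes inj: "injective_endo f" and a: "\<alpha> \<in> hatF"
  shows "\<exists>y. y \<in> hatF \<and> conv f \<alpha> y"
proof (cases "\<exists>m. \<alpha> m = None")
  case True
  then obtain m where m: "\<alpha> m = None" by blast
  have eqk: "wtake k \<alpha> = wtake m \<alpha>" if "k \<ge> m" for k
  proof (rule of_list_eq, rule ext)
    fix i show "of_list (wtake k \<alpha>) i = of_list (wtake m \<alpha>) i"
      using that hatF_None[OF a m, of i] by (auto simp: of_list_wtake[OF a])
  qed
  have "conv f \<alpha> (of_list (endo f (wtake m \<alpha>)))" unfolding conv_def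
  proof (intro allI exI[of _ m] impI)
    fix n k i :: nat assume "m \<le> k" "i < n"
    then show "of_list (endo f (wtake k \<alpha>)) i = of_list (endo f (wtake m \<alpha>)) i"
      using eqk[of k] by simp
  qed
  then show ?thesis using of_list_hatF[OF endo_reduced] by blast
next
  case False
  then have nn: "\<forall>i. \<alpha> i \<noteq> None" by simp
  define ph where "ph k = endo f (wtake k \<alpha>)" for k
  have len: "length (wtake k \<alpha>) = k" for k using nn by (simp add: wtake_all)
  have unb: "\<exists>k. R \<le> length (ph k)" for R
  proof (rule ccontr)
    assume nt: "\<not> ?thesis"
    have "range (\<lambda>k. wtake k \<alpha>) \<subseteq> {w. reduced w \<and> length (endo f w) \<le> R}"
    proof
      fix w assume "w \<in> range (\<lambda>k. wtake k \<alpha>)"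
      then obtain k where k: "w = wtake k \<alpha>" by blast
      have "\<not> R \<le> length (ph k)" using nt by blast
      then show "w \<in> {w. reduced w \<and> length (endo f w) \<le> R}"
        using wtake_reduced[OF a, of k] k unfolding ph_def by simp
    qed
    then have "finite (range (\<lambda>k. wtake k \<alpha>))" by (rule finite_subset) (rule finite_ball[OF inj])
    moreover have "inj (\<lambda>k. wtake k \<alpha>)"
    proof (rule injI)
      fix x y assume "wtake x \<alpha> = wtake y \<alpha>"
      then have "length (wtake x \<alpha>) = length (wtake y \<alpha>)" by (rule arg_cong)
      then show "x = y" by (simp only: len)
    qed
    ultimately have "finite (UNIV :: nat set)" by (rule finite_imageD)
    then show False using infinite_UNIV_nat by blast
  qed
  have stable: "of_list (ph k') i = of_list (ph k) i"
    if "k \<le> k'" "i + 1 + BC f \<le> length (ph k)" for k k' i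
  proof -
    have eq: "wtake k' \<alpha> = wtake k \<alpha> @ drop k (wtake k' \<alpha>)"
      using wtake_take[OF a that(1)] append_take_drop_id[of k "wtake k' \<alpha>"] by simp
    have "reduced (wtake k \<alpha> @ drop k (wtake k' \<alpha>))"
      by (simp only: eq[symmetric] wtake_reduced[OF a])
    from BCL_prefix[OF inj this]
    have "prefix (take (length (ph k) - BC f) (ph k)) (ph k')"
      unfolding ph_def by (simp only: eq[symmetric])
    then obtain r where r: "ph k' = take (length (ph k) - BC f) (ph k) @ r" by (auto simp: prefix_def)
    have "i < length (ph k) - BC f" using that(2) by simp
    then show ?thesis unfolding r by (simp add: of_list_def nth_append) linarith
  qed
  define Kf where "Kf n = (LEAST k. n + BC f \<le> length (ph k))" for n
  have Kf1: "n + BC f \<le> length (ph (Kf n))" for n unfolding Kf_def by (rule LeastI_ex) (rule unb)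
  have Kf2: "n \<le> n' \<Longrightarrow> Kf n \<le> Kf n'" for n n'
    unfolding Kf_def[of n] by (rule Least_le) (use Kf1[of n'] in simp)
  define y where "y i = of_list (ph (Kf (Suc i))) i" for i
  have yk: "of_list (ph k) i = y i" if "Kf (Suc i) \<le> k" for i k
    unfolding y_def by (rule stable[OF that]) (use Kf1[of "Suc i"] in simp)
  have "conv f \<alpha> y" unfolding conv_def
  proof
    fix n show "\<exists>K. \<forall>k\<ge>K. \<forall>i<n. of_list (endo f (wtake k \<alpha>)) i = y i"
    proof (intro exI[of _ "Kf n"] allI impI)
      fix k i assume "Kf n \<le> k" "i < n"
      then have "Kf (Suc i) \<le> k" using Kf2[of "Suc i" n] by simp
      from yk[OF this] show "of_list (endo f (wtake k \<alpha>)) i = y i" by (simp only: ph_def)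
    qed
  qed
  moreover have "y \<in> hatF"
  proof -
    have ySome: "y i \<noteq> None" for i
      using Kf1[of "Suc i"] unfolding y_def of_list_def by simp
    have adj: "y (Suc i) \<noteq> Some (inv_letter x)" if "y i = Some x" for i x
    proof -
      let ?k = "max (Kf (Suc i)) (Kf (Suc (Suc i)))"
      have sx: "of_list (ph ?k) i = Some x" using yk[of i ?k] that by simp
      have "of_list (ph ?k) \<in> hatF" by (simp add: of_list_hatF ph_def)
      then have h: "\<forall>i x y. of_list (ph ?k) i = Some x \<longrightarrow> of_list (ph ?k) (Suc i) = Some y \<longrightarrow> y \<noteq> inv_letter x"
        unfolding hatF_def by blast
      have "of_list (ph ?k) (Suc i) \<noteq> Some (inv_letter x)"
      proof
        assume "of_list (ph ?k) (Suc i) = Some (inv_letter x)"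
        from h[rule_format, OF sx this] show False by simp
      qed
      then show ?thesis using yk[of "Suc i" ?k] by simp
    qed
    show ?thesis unfolding hatF_def mem_Collect_eq
    proof (intro conjI allI impI)
      fix i assume "y i = None" then show "y (Suc i) = None" using ySome[of i] by simp
    next
      fix i x z assume "y i = Some x" "y (Suc i) = Some z"
      then show "z \<noteq> inv_letter x" using adj[of i x] by (intro notI) simp
    qed
  qed
  ultimately show ?thesis by blast
qed

lemma hat_limit:
  fixes f :: "'a::finite \<Rightarrow> 'a letter list"
  assumes inj: "injective_endo f" and a: "\<alpha> \<in> hatF"
  shows "\<exists>K. \<forall>k\<ge>K. \<forall>i<N. of_list (endo f (wtake k \<alpha>)) i = hat f \<alpha> i"
proof -
  obtain y where y: "y \<in> hatF" "conv f \<alpha> y" using conv_exists[OF inj a] by blast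
  have "hat f \<alpha> = y" unfolding hat_def
  proof (rule the_equality)
    show "y \<in> hatF \<and> (\<forall>n. \<exists>K. \<forall>k\<ge>K. \<forall>i<n. of_list (endo f (wtake k \<alpha>)) i = y i)"
      using y unfolding conv_def by blast
  next
    fix y' assume "y' \<in> hatF \<and> (\<forall>n. \<exists>K. \<forall>k\<ge>K. \<forall>i<n. of_list (endo f (wtake k \<alpha>)) i = y' i)"
    then have "conv f \<alpha> y'" unfolding conv_def by blast
    then show "y' = y" using conv_unique y(2) by blast
  qed
  then show ?thesis using y(2) unfolding conv_def by blast
qed



lemma G_red_cons:
  assumes "reduced S1" "reduced S2"
  shows "G (red_cons c S1) (red_cons c S2) \<le> Suc (G S1 S2)"
proof (cases "S1 \<noteq> [] \<and> hd S1 = inv_letter c")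
  case True
  then obtain r1 where S1: "S1 = inv_letter c # r1" by (cases S1) auto
  show ?thesis
  proof (cases "S2 \<noteq> [] \<and> hd S2 = inv_letter c")
    case True
    then obtain r2 where S2: "S2 = inv_letter c # r2" by (cases S2) auto
    show ?thesis unfolding S1 S2 by (simp add: G_def)
  next
    case False
    then have "red_cons c S2 = c # S2" using red_cons_keep by blast
    moreover have "r1 = [] \<or> hd r1 \<noteq> c" using assms(1) S1 by (auto simp: reduced_Cons)
    ultimately show ?thesis unfolding S1 by (cases r1) (auto simp: G_def)
  qed
next
  case False
  then have k1: "red_cons c S1 = c # S1" using red_cons_keep by blast
  show ?thesis
  proof (cases "S2 \<noteq> [] \<and> hd S2 = inv_letter c")
    case True
    then obtain r2 where S2: "S2 = inv_letter c # r2" by (cases S2) auto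
    have "r2 = [] \<or> hd r2 \<noteq> c" using assms(2) S2 by (auto simp: reduced_Cons)
    then show ?thesis unfolding S2 k1 by (cases r2) (auto simp: G_def)
  next
    case False
    then have "red_cons c S2 = c # S2" using red_cons_keep by blast
    then show ?thesis using k1 by (simp add: G_def)
  qed
qed

lemma G_foldr:
  assumes "reduced S1" "reduced S2"
  shows "G (foldr red_cons x S1) (foldr red_cons x S2) \<le> length x + G S1 S2"
proof (induction x)
  case Nil then show ?case by simp
next
  case (Cons c x)
  have "G (foldr red_cons (c # x) S1) (foldr red_cons (c # x) S2)
      \<le> Suc (G (foldr red_cons x S1) (foldr red_cons x S2))"
    using G_red_cons[OF foldr_red_reduced[OF assms(1)] foldr_red_reduced[OF assms(2)]] by simp
  then show ?case using Cons.IH by simp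
qed

lemma side:
  fixes f :: "'a::finite \<Rightarrow> 'a letter list"
  assumes inj: "injective_endo f" and r1: "reduced (\<alpha> @ t1)" and r2: "reduced (\<alpha> @ t2)"
    and ne: "t1 \<noteq> []" "t2 \<noteq> []" "hd t1 \<noteq> hd t2"
  shows "length (endo f \<alpha>) \<le> G (endo f \<alpha>) (endo f (\<alpha> @ t1)) + BC f"
    and "length (endo f \<alpha>) \<le> G (endo f \<alpha>) (endo f (\<alpha> @ t2)) + BC f"
    and "G (endo f (\<alpha> @ t1)) (endo f (\<alpha> @ t2)) \<le> length (endo f \<alpha>) + BC f"
proof -
  let ?x = "endo f \<alpha>"
  have pre: "length ?x \<le> G ?x (endo f (\<alpha> @ t)) + BC f" if r: "reduced (\<alpha> @ t)" for t
  proof -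
    have "prefix (take (length ?x - BC f) ?x) (endo f (\<alpha> @ t))" by (rule BCL_prefix[OF inj r])
    moreover have "prefix (take (length ?x - BC f) ?x) ?x" by (rule take_is_prefix)
    ultimately have "length (take (length ?x - BC f) ?x) \<le> G ?x (endo f (\<alpha> @ t))"
      using G_prefix by blast
    then show ?thesis by simp
  qed
  show "length ?x \<le> G ?x (endo f (\<alpha> @ t1)) + BC f" by (rule pre[OF r1])
  show "length ?x \<le> G ?x (endo f (\<alpha> @ t2)) + BC f" by (rule pre[OF r2])
  have rt1: "reduced t1" and rt2: "reduced t2" using r1 r2 by (auto simp: reduced_append)
  have e: "endo f (\<alpha> @ t) = foldr red_cons ?x (endo f t)" for t
    by (simp add: endo_append reduce_append_foldr reduce_id)
  have "G (endo f (\<alpha> @ t1)) (endo f (\<alpha> @ t2)) \<le> length ?x + G (endo f t1) (endo f t2)"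
    unfolding e by (rule G_foldr) simp_all
  moreover have "G (endo f t1) (endo f t2) \<le> BC f" by (rule BCL[OF inj rt1 rt2]) (use ne in simp)
  ultimately show "G (endo f (\<alpha> @ t1)) (endo f (\<alpha> @ t2)) \<le> length ?x + BC f" by simp
qed

lemma lcp_self: "lcp p p = p" by (induction p) auto

lemma G_agree:
  assumes "take N p = take N q"
  shows "min N (length p) \<le> G p q"
proof -
  have "min N (G p q) = G (take N p) (take N q)" by (simp add: G_take)
  also have "\<dots> = length (take N p)" using assms by (simp add: G_def lcp_self)
  finally show ?thesis by simp
qed

lemma G_agree2:
  assumes "take N p = take N p'" "take N q = take N q'" "G p q < N" "G p' q' < N"
  shows "G p q = G p' q'"
proof -
  have "min N (G p q) = min N (G p' q')" using assms(1,2) G_take by metis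
  then show ?thesis using assms(3,4) by simp
qed

lemma main_finite:
  fixes f g :: "'a::finite \<Rightarrow> 'a letter list"
  assumes injf: "injective_endo f" and injg: "injective_endo g"
    and r1: "reduced (\<alpha> @ t1)" and r2: "reduced (\<alpha> @ t2)"
    and ne: "t1 \<noteq> []" "t2 \<noteq> []" "hd t1 \<noteq> hd t2"
    and C: "BC f \<le> C" "BC g \<le> C"
    and N: "length (endo f \<alpha>) + length (endo g \<alpha>) + 2 * C + 1 \<le> N"
    and a1: "take N (endo f (\<alpha> @ t1)) = take N (endo g (\<alpha> @ t1))"
    and a2: "take N (endo f (\<alpha> @ t2)) = take N (endo g (\<alpha> @ t2))"
  shows "length (reduce (winv (endo f \<alpha>) @ endo g \<alpha>)) \<le> 4 * C"
proof -
  define x where "x = endo f \<alpha>"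
  define y where "y = endo g \<alpha>"
  define u1 where "u1 = endo f (\<alpha> @ t1)"
  define u2 where "u2 = endo f (\<alpha> @ t2)"
  define v1 where "v1 = endo g (\<alpha> @ t1)"
  define v2 where "v2 = endo g (\<alpha> @ t2)"
  note sf = side[OF injf r1 r2 ne, folded x_def u1_def u2_def]
  note sg = side[OF injg r1 r2 ne, folded y_def v1_def v2_def]
  have xu1: "length x \<le> G x u1 + C" using sf(1) C by simp
  have xu2: "length x \<le> G x u2 + C" using sf(2) C by simp
  have u12: "G u1 u2 \<le> length x + C" using sf(3) C by simp
  have yv1: "length y \<le> G y v1 + C" using sg(1) C by simp
  have yv2: "length y \<le> G y v2 + C" using sg(2) C by simp
  have v12: "G v1 v2 \<le> length y + C" using sg(3) C by simp
  have "min (G u1 x) (G x u2) \<le> G u1 u2" by (rule G_ultra)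
  then have lu: "length x \<le> G u1 u2 + C" using xu1 xu2 G_comm[of u1 x] by linarith
  have "min (G v1 y) (G y v2) \<le> G v1 v2" by (rule G_ultra)
  then have lv: "length y \<le> G v1 v2 + C" using yv1 yv2 G_comm[of v1 y] by linarith
  have eq: "G u1 u2 = G v1 v2"
    by (rule G_agree2[OF a1[folded u1_def v1_def] a2[folded u2_def v2_def]])
       (use u12 v12 N in \<open>simp_all add: x_def y_def\<close>)
  have b: "min N (length u1) \<le> G u1 v1" by (rule G_agree[OF a1[folded u1_def v1_def]])
  have "G x u1 \<le> length u1" by (rule G_le2)
  then have b2: "length x \<le> G u1 v1 + C" using b N xu1 unfolding x_def by linarith
  have "min (G x u1) (G u1 y) \<le> G x y" by (rule G_ultra)
  moreover have "min (G u1 v1) (G v1 y) \<le> G u1 y" by (rule G_ultra)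
  ultimately have gxy: "length x \<le> G x y + C \<or> length y \<le> G x y + C"
    using xu1 b2 yv1 G_comm[of v1 y] by linarith
  have d: "length (reduce (winv x @ y)) + 2 * G x y = length x + length y"
    by (rule dist_formula) (simp_all add: x_def y_def)
  have "G x y \<le> length x" "G x y \<le> length y" by (rule G_le1, rule G_le2)
  then have "length (reduce (winv x @ y)) \<le> 4 * C"
    using d gxy lu lv eq u12 v12 by linarith
  then show ?thesis by (simp add: x_def y_def)
qed



lemma wtake_stop:
  assumes a: "\<alpha> \<in> hatF" and n: "\<alpha> m = None" and mk: "m \<le> k"
  shows "wtake k \<alpha> = wtake m \<alpha>"
proof (rule of_list_eq, rule ext)
  fix i show "of_list (wtake k \<alpha>) i = of_list (wtake m \<alpha>) i"
    using mk hatF_None[OF a n, of i] by (auto simp: of_list_wtake[OF a])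
qed

lemma wtake_split:
  assumes a: "\<alpha> \<in> hatF" and mk: "m < k" and s: "\<alpha> m = Some c"
  shows "wtake k \<alpha> = wtake m \<alpha> @ drop m (wtake k \<alpha>)"
    and "drop m (wtake k \<alpha>) \<noteq> []" and "hd (drop m (wtake k \<alpha>)) = c"
proof -
  show "wtake k \<alpha> = wtake m \<alpha> @ drop m (wtake k \<alpha>)"
    using wtake_take[OF a, of m k] mk append_take_drop_id[of m "wtake k \<alpha>"] by simp
  have "of_list (wtake k \<alpha>) m = Some c" using mk s by (simp add: of_list_wtake[OF a])
  then have "m < length (wtake k \<alpha>)" "wtake k \<alpha> ! m = c"
    by (auto simp: of_list_def split: if_splits)
  then show "drop m (wtake k \<alpha>) \<noteq> []" "hd (drop m (wtake k \<alpha>)) = c"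
    by (auto simp: hd_drop_conv_nth)
qed

lemma eq_case:
  assumes "take N x = take N y" "length x \<le> N" "length y \<le> N"
  shows "length (reduce (winv x @ y)) = 0"
proof -
  have "x = y" using assms by simp
  then show ?thesis using reduce_cancel_winv[of "[]" x "[]"] by simp
qed

theorem lemma2p2:
  fixes f g :: "'a::finite \<Rightarrow> 'a letter list"
  assumes "injective_endo f" and "injective_endo g"
  shows "\<exists>M::nat. \<forall>\<alpha>1 \<alpha>2. \<alpha>1 \<in> Eq_hat f g \<longrightarrow> \<alpha>2 \<in> Eq_hat f g \<longrightarrow> \<alpha>1 \<noteq> \<alpha>2 \<longrightarrow>
           length (reduce (winv (endo f (wedge \<alpha>1 \<alpha>2)) @ endo g (wedge \<alpha>1 \<alpha>2))) \<le> M"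
proof (intro exI allI impI)
  note injf = assms(1) and injg = assms(2)
  define C where "C = max (BC f) (BC g)"
  fix \<alpha>1 \<alpha>2 assume e1: "\<alpha>1 \<in> Eq_hat f g" and e2: "\<alpha>2 \<in> Eq_hat f g" and ne: "\<alpha>1 \<noteq> \<alpha>2"
  have a1: "\<alpha>1 \<in> hatF" and h1: "hat f \<alpha>1 = hat g \<alpha>1" using e1 by (auto simp: Eq_hat_def)
  have a2: "\<alpha>2 \<in> hatF" and h2: "hat f \<alpha>2 = hat g \<alpha>2" using e2 by (auto simp: Eq_hat_def)
  define m where "m = (LEAST i. \<alpha>1 i \<noteq> \<alpha>2 i)"
  have ex: "\<exists>i. \<alpha>1 i \<noteq> \<alpha>2 i" using ne by auto
  have dm: "\<alpha>1 m \<noteq> \<alpha>2 m" unfolding m_def using ex by (rule LeastI_ex)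
  have below: "\<alpha>1 i = \<alpha>2 i" if "i < m" for i using not_less_Least[OF that[unfolded m_def]] by simp
  define \<alpha> where "\<alpha> = wedge \<alpha>1 \<alpha>2"
  have al1: "\<alpha> = wtake m \<alpha>1" unfolding \<alpha>_def wedge_def m_def ..
  have al2: "\<alpha> = wtake m \<alpha>2"
    unfolding al1 by (rule of_list_eq, rule ext) (simp add: of_list_wtake a1 a2 below)
  define x where "x = endo f \<alpha>"
  define y where "y = endo g \<alpha>"
  define N where "N = length x + length y + 2 * C + 1"
  obtain K1 where K1: "\<forall>k\<ge>K1. \<forall>i<N. of_list (endo f (wtake k \<alpha>1)) i = hat f \<alpha>1 i"
    using hat_limit[OF injf a1] by blast
  obtain K2 where K2: "\<forall>k\<ge>K2. \<forall>i<N. of_list (endo g (wtake k \<alpha>1)) i = hat g \<alpha>1 i"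
    using hat_limit[OF injg a1] by blast
  obtain K3 where K3: "\<forall>k\<ge>K3. \<forall>i<N. of_list (endo f (wtake k \<alpha>2)) i = hat f \<alpha>2 i"
    using hat_limit[OF injf a2] by blast
  obtain K4 where K4: "\<forall>k\<ge>K4. \<forall>i<N. of_list (endo g (wtake k \<alpha>2)) i = hat g \<alpha>2 i"
    using hat_limit[OF injg a2] by blast
  define k where "k = max (max K1 K2) (max K3 (max K4 (Suc m)))"
  define A1 where "A1 = wtake k \<alpha>1"
  define A2 where "A2 = wtake k \<alpha>2"
  have t1: "take N (endo f A1) = take N (endo g A1)"
    by (rule of_list_take_eq) (use K1 K2 h1 in \<open>simp add: A1_def k_def\<close>)
  have t2: "take N (endo f A2) = take N (endo g A2)"
    by (rule of_list_take_eq) (use K3 K4 h2 in \<open>simp add: A2_def k_def\<close>)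
  have mk: "m < k" by (simp add: k_def)
  have "length (reduce (winv x @ y)) \<le> 4 * C"
  proof (cases "\<alpha>1 m = None")
    case True
    have "A1 = \<alpha>" unfolding A1_def al1 using wtake_stop[OF a1 True, of k] mk by simp
    then show ?thesis using eq_case[OF t1] N_def x_def y_def by simp
  next
    case False
    then obtain c1 where c1: "\<alpha>1 m = Some c1" by blast
    show ?thesis
    proof (cases "\<alpha>2 m = None")
      case True
      have "A2 = \<alpha>" unfolding A2_def al2 using wtake_stop[OF a2 True, of k] mk by simp
      then show ?thesis using eq_case[OF t2] N_def x_def y_def by simp
    next
      case False
      then obtain c2 where c2: "\<alpha>2 m = Some c2" by blast
      note s1 = wtake_split[OF a1 mk c1, folded al1 A1_def]
      note s2 = wtake_split[OF a2 mk c2, folded al2 A2_def]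
      have "reduced A1" unfolding A1_def by (rule wtake_reduced[OF a1])
      then have r1: "reduced (\<alpha> @ drop m A1)" by (simp only: s1(1)[symmetric])
      have "reduced A2" unfolding A2_def by (rule wtake_reduced[OF a2])
      then have r2: "reduced (\<alpha> @ drop m A2)" by (simp only: s2(1)[symmetric])
      have t1': "take N (endo f (\<alpha> @ drop m A1)) = take N (endo g (\<alpha> @ drop m A1))"
        using t1 by (simp only: s1(1)[symmetric])
      have t2': "take N (endo f (\<alpha> @ drop m A2)) = take N (endo g (\<alpha> @ drop m A2))"
        using t2 by (simp only: s2(1)[symmetric])
      have "c1 \<noteq> c2" using dm c1 c2 by simp
      then have hd: "hd (drop m A1) \<noteq> hd (drop m A2)" using s1(3) s2(3) by simp
      show ?thesis unfolding x_def y_def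
        by (rule main_finite[OF injf injg r1 r2 s1(2) s2(2) hd _ _ _ t1' t2'])
           (simp_all add: C_def N_def x_def y_def)
    qed
  qed
  then show "length (reduce (winv (endo f (wedge \<alpha>1 \<alpha>2)) @ endo g (wedge \<alpha>1 \<alpha>2))) \<le> 4 * C"
    by (simp add: x_def y_def \<alpha>_def)
qed


end
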